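(* Let $B,C\subset\mathbb Z^b\times\{0,1\}$ be finite and let $M\in\mathcal M^B_C$ have a left inverse $N\in\mathcal M^C_B$ (i.e. $NM=I_B$). Then: (1) for every $P\in\mathcal M^B_C$ with $|\!|\!| N|\!|\!|_{s_0}|\!|\!| P|\!|\!|_{s_0}\leq1/2$, the matrix $M+P$ has a left inverse $N_P$ satisfying $|\!|\!| N_P|\!|\!|_{s_0}\leq2|\!|\!| N|\!|\!|_{s_0}$ and, for every $s\geq s_0$, $$|\!|\!| N_P|\!|\!|_s\leq\big(1+C(s)|\!|\!| N|\!|\!|_{s_0}|\!|\!| P|\!|\!|_{s_0}\big)|\!|\!| N|\!|\!|_s+C(s)|\!|\!| N|\!|\!|_{s_0}^2|\!|\!| P|\!|\!|_s\leq C(s)\big(|\!|\!| N|\!|\!|_s+|\!|\!| N|\!|\!|_{s_0}^2|\!|\!| P|\!|\!|_s\big),$$ where $C(s)$ is a constant depending only on $s$; (2) for every $P\in\mathcal M^B_C$ with $\|N\|_0\|P\|_0\leq1/2$, the matrix $M+P$ has a left inverse $N_P$ with $\|N_P\|_0\leq2\|N\|_0$.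
   Context: $d,\nu\geq1$, $b=\nu+d$, $s_0>(d+\nu)/2$ fixed. For $n\in\mathbb Z^b$, $|n|=\max_i|n_i|$, $\langle n\rangle=\max(|n|,1)$. For finite $B,C$, $\mathcal M^B_C$ is the space of complex matrices $(M_k^{k'})_{k\in C,k'\in B}$; $\overline B,\overline C$ are the projections on $\mathbb Z^b$; $M_i^{i'}$ is the block with rows $\{(i,a)\in C\}$ and columns $\{(i',a')\in B\}$. A norm $|\cdot|$ is fixed on complex matrices of size at most $2\times2$ with $|UW|\leq|U||W|$ and $|U|\leq|W|$ if $U$ is a submatrix of $W$. $[M(n)]:=\max_{i-i'=n}|M_i^{i'}|$ if $n\in\overline C-\overline B$, $0$ otherwise; $|\!|\!| M|\!|\!|_s^2:=K_0\sum_n[M(n)]^2\langle n\rangle^{2s}$, where $K_0>0$ is a fixed constant independent of $s$ such that the Sobolev norm $\|u\|_s^2=K_0\sum_i|u_i|^2\langle i\rangle^{2s}$ on $\mathbb T^b$ satisfies $\sup|u|\leq\|u\|_{s_0}$ and $\|u_1u_2\|_s\leq\frac12\|u_1\|_{s_0}\|u_2\|_s+\frac{C(s)}2\|u_1\|_s\|u_2\|_{s_0}$ for $s\geq s_0$ with $C(s)\geq 1$, $C(s_0)=1$. $\mathbf H_B$ is the space of vectors indexed by $B$, identified with column matrices, with $\|h\|_0:=|\!|\!| h|\!|\!|_0$, and $\|M\|_0:=\sup_{h\neq0}\|Mh\|_0/\|h\|_0$ is the corresponding operator norm. *)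

theory Defs
  imports "HOL-Analysis.Analysis"
begin

type_synonym 'b idx = "(int ^ 'b) \<times> nat"
type_synonym 'b mat = "'b idx \<Rightarrow> 'b idx \<Rightarrow> complex"

definition supabs :: "int ^ 'b::finite \<Rightarrow> real" where
  "supabs n = real_of_int (Max (range (\<lambda>j. \<bar>n $ j\<bar>)))"

definition jb :: "int ^ 'b::finite \<Rightarrow> real" where
  "jb n = max (supabs n) 1"

text \<open>Block norm: nrm R S f is the norm of the matrix with row labels R, column labels S
  (subsets of {0,1}) and entries f a a'.\<close>
type_synonym blknorm = "nat set \<Rightarrow> nat set \<Rightarrow> (nat \<Rightarrow> nat \<Rightarrow> complex) \<Rightarrow> real"

definition is_block_norm :: "blknorm \<Rightarrow> bool" where
  "is_block_norm nrm \<longleftrightarrow>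
    (\<forall>R S f. R \<subseteq> {0,1} \<longrightarrow> S \<subseteq> {0,1} \<longrightarrow> nrm R S f \<ge> 0) \<and>
    (\<forall>R S f. R \<subseteq> {0,1} \<longrightarrow> S \<subseteq> {0,1} \<longrightarrow>
        (nrm R S f = 0 \<longleftrightarrow> (\<forall>a\<in>R. \<forall>a'\<in>S. f a a' = 0))) \<and>
    (\<forall>R S f g. R \<subseteq> {0,1} \<longrightarrow> S \<subseteq> {0,1} \<longrightarrow>
        (\<forall>a\<in>R. \<forall>a'\<in>S. f a a' = g a a') \<longrightarrow> nrm R S f = nrm R S g) \<and>
    (\<forall>R S f c. R \<subseteq> {0,1} \<longrightarrow> S \<subseteq> {0,1} \<longrightarrow>
        nrm R S (\<lambda>a a'. c * f a a') = cmod c * nrm R S f) \<and>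
    (\<forall>R S f g. R \<subseteq> {0,1} \<longrightarrow> S \<subseteq> {0,1} \<longrightarrow>
        nrm R S (\<lambda>a a'. f a a' + g a a') \<le> nrm R S f + nrm R S g) \<and>
    (\<forall>R S T f g. R \<subseteq> {0,1} \<longrightarrow> S \<subseteq> {0,1} \<longrightarrow> T \<subseteq> {0,1} \<longrightarrow>
        nrm R T (\<lambda>a a''. \<Sum>a'\<in>S. f a a' * g a' a'') \<le> nrm R S f * nrm S T g) \<and>
    (\<forall>R S R' S' f. R \<subseteq> {0,1} \<longrightarrow> S \<subseteq> {0,1} \<longrightarrow> R' \<subseteq> R \<longrightarrow> S' \<subseteq> S \<longrightarrow>
        nrm R' S' f \<le> nrm R S f)"

text \<open>Matrices in M^Cl_Rw: rows indexed by Rw, columns by Cl.\<close>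
definition rowblk :: "'b idx set \<Rightarrow> int ^ 'b \<Rightarrow> nat set" where
  "rowblk X i = {a. (i, a) \<in> X}"

definition bracket :: "blknorm \<Rightarrow> 'b::finite idx set \<Rightarrow> 'b idx set \<Rightarrow> 'b mat \<Rightarrow> int ^ 'b \<Rightarrow> real" where
  "bracket nrm Rw Cl M n =
     Max (insert 0 {nrm (rowblk Rw i) (rowblk Cl i') (\<lambda>a a'. M (i, a) (i', a')) | i i'.
                     i \<in> fst ` Rw \<and> i' \<in> fst ` Cl \<and> i - i' = n})"

definition diffset :: "'b::finite idx set \<Rightarrow> 'b idx set \<Rightarrow> (int ^ 'b) set" where
  "diffset Rw Cl = {i - i' | i i'. i \<in> fst ` Rw \<and> i' \<in> fst ` Cl}"

definition tnorm :: "real \<Rightarrow> blknorm \<Rightarrow> 'b::finite idx set \<Rightarrow> 'b idx set \<Rightarrow> real \<Rightarrow> 'b mat \<Rightarrow> real" where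
  "tnorm K0 nrm Rw Cl s M =
     sqrt (K0 * (\<Sum>n\<in>diffset Rw Cl. (bracket nrm Rw Cl M n)\<^sup>2 * jb n powr (2 * s)))"

text \<open>Vectors of H_X (functions on X) as column matrices with the single column index (0,0).\<close>
definition vnorm0 :: "real \<Rightarrow> blknorm \<Rightarrow> 'b::finite idx set \<Rightarrow> ('b idx \<Rightarrow> complex) \<Rightarrow> real" where
  "vnorm0 K0 nrm X h = tnorm K0 nrm X {(0, 0)} 0 (\<lambda>k k'. h k)"

definition matvec :: "'b idx set \<Rightarrow> 'b mat \<Rightarrow> ('b idx \<Rightarrow> complex) \<Rightarrow> ('b idx \<Rightarrow> complex)" where
  "matvec Cl M h = (\<lambda>k. \<Sum>k'\<in>Cl. M k k' * h k')"

definition opnorm0 :: "real \<Rightarrow> blknorm \<Rightarrow> 'b::finite idx set \<Rightarrow> 'b idx set \<Rightarrow> 'b mat \<Rightarrow> real" where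
  "opnorm0 K0 nrm Rw Cl M =
     Sup (insert 0 {vnorm0 K0 nrm Rw (matvec Cl M h) / vnorm0 K0 nrm Cl h | h.
                    \<exists>k\<in>Cl. h k \<noteq> 0})"

definition left_inv :: "'b idx set \<Rightarrow> 'b idx set \<Rightarrow> 'b mat \<Rightarrow> 'b mat \<Rightarrow> bool" where
  "left_inv B C N M \<longleftrightarrow>
     (\<forall>k\<in>B. \<forall>k'\<in>B. (\<Sum>j\<in>C. N k j * M j k') = (if k = k' then 1 else 0))"

text \<open>Sobolev norm on T^b for trigonometric polynomials (finitely supported Fourier coefficients).\<close>
definition sob_norm :: "real \<Rightarrow> real \<Rightarrow> (int ^ 'b::finite \<Rightarrow> complex) \<Rightarrow> real" where
  "sob_norm K0 s u = sqrt (K0 * (\<Sum>i\<in>{i. u i \<noteq> 0}. (cmod (u i))\<^sup>2 * jb i powr (2 * s)))"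

definition conv :: "(int ^ 'b::finite \<Rightarrow> complex) \<Rightarrow> (int ^ 'b \<Rightarrow> complex) \<Rightarrow> int ^ 'b \<Rightarrow> complex" where
  "conv u v = (\<lambda>i. \<Sum>j\<in>{j. u j \<noteq> 0}. u j * v (i - j))"

definition trig :: "(int ^ 'b::finite \<Rightarrow> complex) \<Rightarrow> real ^ 'b \<Rightarrow> complex" where
  "trig u x = (\<Sum>i\<in>{i. u i \<noteq> 0}.
      u i * exp (\<i> * complex_of_real (\<Sum>j\<in>UNIV. real_of_int (i $ j) * x $ j)))"

definition sobolev_ok :: "real \<Rightarrow> real \<Rightarrow> (real \<Rightarrow> real) \<Rightarrow> 'b::finite itself \<Rightarrow> bool" where
  "sobolev_ok K0 s0 Cs _ \<longleftrightarrow> K0 > 0 \<and> Cs s0 = 1 \<and> (\<forall>s\<ge>s0. Cs s \<ge> 1) \<and>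
    (\<forall>u::int ^ 'b \<Rightarrow> complex. finite {i. u i \<noteq> 0} \<longrightarrow>
        (\<forall>x. cmod (trig u x) \<le> sob_norm K0 s0 u)) \<and>
    (\<forall>(u1::int ^ 'b \<Rightarrow> complex) u2 s. finite {i. u1 i \<noteq> 0} \<longrightarrow> finite {i. u2 i \<noteq> 0} \<longrightarrow>
        s \<ge> s0 \<longrightarrow>
        sob_norm K0 s (conv u1 u2) \<le> 1/2 * sob_norm K0 s0 u1 * sob_norm K0 s u2
                                      + Cs s / 2 * sob_norm K0 s u1 * sob_norm K0 s0 u2)"

end

theory Submission
  imports "Jordan_Normal_Form.Determinant" Defs
begin

lemmas bnD = is_block_norm_def[THEN iffD1]

lemma bn_nonneg: assumes "is_block_norm nrm" "R \<subseteq> {0,1}" "S \<subseteq> {0,1}" shows "nrm R S f \<ge> 0"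
  using bnD[OF assms(1), THEN conjunct1] assms(2,3) by blast
lemma bn_zero: assumes "is_block_norm nrm" "R \<subseteq> {0,1}" "S \<subseteq> {0,1}" shows
   "nrm R S f = 0 \<longleftrightarrow> (\<forall>a\<in>R. \<forall>a'\<in>S. f a a' = 0)"
  using bnD[OF assms(1), THEN conjunct2, THEN conjunct1] assms(2,3) by blast
lemma bn_cong: assumes "is_block_norm nrm" "R \<subseteq> {0,1}" "S \<subseteq> {0,1}"
   "\<forall>a\<in>R. \<forall>a'\<in>S. f a a' = g a a'" shows "nrm R S f = nrm R S g"
  using bnD[OF assms(1), THEN conjunct2, THEN conjunct2, THEN conjunct1] assms(2-4) by blast
lemma bn_scale: assumes "is_block_norm nrm" "R \<subseteq> {0,1}" "S \<subseteq> {0,1}" shows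
   "nrm R S (\<lambda>a a'. c * f a a') = cmod c * nrm R S f"
  using bnD[OF assms(1), THEN conjunct2, THEN conjunct2, THEN conjunct2, THEN conjunct1] assms(2,3) by blast
lemma bn_add: assumes "is_block_norm nrm" "R \<subseteq> {0,1}" "S \<subseteq> {0,1}" shows
   "nrm R S (\<lambda>a a'. f a a' + g a a') \<le> nrm R S f + nrm R S g"
  using bnD[OF assms(1), THEN conjunct2, THEN conjunct2, THEN conjunct2, THEN conjunct2, THEN conjunct1] assms(2,3) by blast
lemma bn_mult: assumes "is_block_norm nrm" "R \<subseteq> {0,1}" "S \<subseteq> {0,1}" "T \<subseteq> {0,1}" shows
        "nrm R T (\<lambda>a a''. \<Sum>a'\<in>S. f a a' * g a' a'') \<le> nrm R S f * nrm S T g"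
  using bnD[OF assms(1), THEN conjunct2, THEN conjunct2, THEN conjunct2, THEN conjunct2, THEN conjunct2, THEN conjunct1] assms(2-4) by blast

lemma bn_diff: assumes "is_block_norm nrm" "R \<subseteq> {0,1}" "S \<subseteq> {0,1}"
  shows "nrm R S (\<lambda>a a'. f a a' - g a a') \<le> nrm R S f + nrm R S g"
proof -
  have "nrm R S (\<lambda>a a'. f a a' - g a a') = nrm R S (\<lambda>a a'. f a a' + (-1) * g a a')" by simp
  also have "\<dots> \<le> nrm R S f + nrm R S (\<lambda>a a'. (-1) * g a a')" by (rule bn_add[OF assms])
  also have "nrm R S (\<lambda>a a'. (-1) * g a a') = nrm R S g" using bn_scale[OF assms, of "-1" g] by simp
  finally show ?thesis .
qed

lemma bn_sum: assumes "is_block_norm nrm" "R \<subseteq> {0,1}" "S \<subseteq> {0,1}" "finite I"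
  shows "nrm R S (\<lambda>a a'. \<Sum>x\<in>I. F x a a') \<le> (\<Sum>x\<in>I. nrm R S (F x))"
  using assms(4)
proof (induction I rule: finite_induct)
  case empty
  then show ?case using bn_zero[OF assms(1-3), of "\<lambda>a a'. 0"] by simp
next
  case (insert x I)
  have "nrm R S (\<lambda>a a'. \<Sum>x\<in>insert x I. F x a a') = nrm R S (\<lambda>a a'. F x a a' + (\<Sum>x\<in>I. F x a a'))"
    using insert by simp
  also have "\<dots> \<le> nrm R S (F x) + nrm R S (\<lambda>a a'. \<Sum>x\<in>I. F x a a')"
    using bn_add[OF assms(1-3), of "F x" "\<lambda>a a'. \<Sum>x\<in>I. F x a a'"] by simp
  also have "\<dots> \<le> nrm R S (F x) + (\<Sum>x\<in>I. nrm R S (F x))" using insert by simp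
  finally show ?case using insert by simp
qed

lemma rowblk_sub: "X \<subseteq> UNIV \<times> {0,1} \<Longrightarrow> rowblk X i \<subseteq> {0,1}"
  unfolding rowblk_def by auto

lemma bracket_set_finite: assumes "finite Rw" "finite Cl"
  shows "finite {nrm (rowblk Rw i) (rowblk Cl i') (\<lambda>a a'. M (i, a) (i', a')) | i i'.
                     i \<in> fst ` Rw \<and> i' \<in> fst ` Cl \<and> i - i' = n}"
proof -
  have "{nrm (rowblk Rw i) (rowblk Cl i') (\<lambda>a a'. M (i, a) (i', a')) | i i'.
                     i \<in> fst ` Rw \<and> i' \<in> fst ` Cl \<and> i - i' = n}
    \<subseteq> (\<lambda>(i,i'). nrm (rowblk Rw i) (rowblk Cl i') (\<lambda>a a'. M (i, a) (i', a'))) ` (fst ` Rw \<times> fst ` Cl)"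
    by auto
  moreover have "finite ((\<lambda>(i,i'). nrm (rowblk Rw i) (rowblk Cl i') (\<lambda>a a'. M (i, a) (i', a'))) ` (fst ` Rw \<times> fst ` Cl))"
    using assms by auto
  ultimately show ?thesis by (rule finite_subset)
qed

abbreviation bset where "bset nrm Rw Cl M n \<equiv> {nrm (rowblk Rw i) (rowblk Cl i') (\<lambda>a a'. M (i, a) (i', a')) | i i'.
                     i \<in> fst ` Rw \<and> i' \<in> fst ` Cl \<and> i - i' = n}"

lemma bracket_nonneg: assumes "finite Rw" "finite Cl" shows "bracket nrm Rw Cl M n \<ge> 0"
proof -
  have "finite (insert 0 (bset nrm Rw Cl M n))" using bracket_set_finite[OF assms] by simp
  from Max_ge[OF this insertI1] show ?thesis unfolding bracket_def .
qed

lemma block_le_bracket: assumes "finite Rw" "finite Cl" "i \<in> fst ` Rw" "i' \<in> fst ` Cl" shows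
   "nrm (rowblk Rw i) (rowblk Cl i') (\<lambda>a a'. M (i, a) (i', a')) \<le> bracket nrm Rw Cl M (i - i')"
proof -
  have f: "finite (insert 0 (bset nrm Rw Cl M (i - i')))" using bracket_set_finite[OF assms(1,2)] by simp
  have "nrm (rowblk Rw i) (rowblk Cl i') (\<lambda>a a'. M (i, a) (i', a')) \<in> bset nrm Rw Cl M (i - i')"
    using assms(3,4) by blast
  then have "nrm (rowblk Rw i) (rowblk Cl i') (\<lambda>a a'. M (i, a) (i', a')) \<in> insert 0 (bset nrm Rw Cl M (i - i'))"
    by blast
  from Max_ge[OF f this] show ?thesis unfolding bracket_def .
qed

lemma bracket_le: assumes "finite Rw" "finite Cl" "c \<ge> 0"
  "\<And>i i'. i \<in> fst ` Rw \<Longrightarrow> i' \<in> fst ` Cl \<Longrightarrow> i - i' = n \<Longrightarrow>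
      nrm (rowblk Rw i) (rowblk Cl i') (\<lambda>a a'. M (i, a) (i', a')) \<le> c"
  shows "bracket nrm Rw Cl M n \<le> c"
  unfolding bracket_def
proof (rule Max.boundedI)
  show "finite (insert 0 (bset nrm Rw Cl M n))" using bracket_set_finite[OF assms(1,2)] by simp
  show "insert 0 (bset nrm Rw Cl M n) \<noteq> {}" by simp
  fix x assume "x \<in> insert 0 (bset nrm Rw Cl M n)"
  then have "x = 0 \<or> (\<exists>i i'. x = nrm (rowblk Rw i) (rowblk Cl i') (\<lambda>a a'. M (i, a) (i', a')) \<and>
                     i \<in> fst ` Rw \<and> i' \<in> fst ` Cl \<and> i - i' = n)" by blast
  then show "x \<le> c" using assms(3,4) by blast
qed

lemma bracket_out: assumes "n \<notin> diffset Rw Cl" shows "bracket nrm Rw Cl M n = 0"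
proof -
  have e: "bset nrm Rw Cl M n = {}" using assms unfolding diffset_def by auto
  show ?thesis unfolding bracket_def e by simp
qed

lemma diffset_finite: "finite Rw \<Longrightarrow> finite Cl \<Longrightarrow> finite (diffset Rw Cl)"
proof -
  assume "finite Rw" "finite Cl"
  have "diffset Rw Cl = (\<lambda>(i,i'). i - i') ` (fst ` Rw \<times> fst ` Cl)" unfolding diffset_def by auto
  then show ?thesis using \<open>finite Rw\<close> \<open>finite Cl\<close> by auto
qed


lemma jb_ge1: "jb n \<ge> 1" unfolding jb_def by simp
lemma jb_pos: "jb n > 0" using jb_ge1[of n] by simp

abbreviation "SUBI X \<equiv> X \<subseteq> UNIV \<times> {0::nat,1}"

lemma tnorm_nonneg: "K0 \<ge> 0 \<Longrightarrow> tnorm K0 nrm Rw Cl s X \<ge> 0"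
  unfolding tnorm_def
  apply (rule real_sqrt_ge_zero)
  apply (rule mult_nonneg_nonneg, assumption)
  apply (rule sum_nonneg)
  apply (rule mult_nonneg_nonneg)
   apply (rule zero_le_power2)
  apply (rule powr_ge_zero)
  done

lemma tnorm_L2: assumes "K0 \<ge> 0"
  shows "tnorm K0 nrm Rw Cl s X = sqrt K0 * L2_set (\<lambda>n. bracket nrm Rw Cl X n * jb n powr s) (diffset Rw Cl)"
proof -
  have "(bracket nrm Rw Cl X n * jb n powr s)\<^sup>2 = (bracket nrm Rw Cl X n)\<^sup>2 * jb n powr (2 * s)" for n
  proof -
    have "(jb n powr s)\<^sup>2 = jb n powr s * jb n powr s" by (rule power2_eq_square)
    also have "\<dots> = jb n powr (s + s)" by (rule powr_add[symmetric])
    also have "s + s = 2 * s" by simp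
    finally have "(jb n powr s)\<^sup>2 = jb n powr (2 * s)" .
    then show ?thesis by (simp only: power_mult_distrib)
  qed
  then have "(\<Sum>n\<in>diffset Rw Cl. (bracket nrm Rw Cl X n * jb n powr s)\<^sup>2) = (\<Sum>n\<in>diffset Rw Cl. (bracket nrm Rw Cl X n)\<^sup>2 * jb n powr (2 * s))"
    by (rule sum.cong[OF refl])
  then show ?thesis unfolding tnorm_def L2_set_def by (simp only: real_sqrt_mult)
qed

lemma bracket_diff: assumes nrm: "is_block_norm nrm" and fin: "finite Rw" "finite Cl" and sub: "SUBI Rw" "SUBI Cl"
  shows "bracket nrm Rw Cl (\<lambda>k k'. X k k' - Y k k') n \<le> bracket nrm Rw Cl X n + bracket nrm Rw Cl Y n"
proof (rule bracket_le[OF fin])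
  show "0 \<le> bracket nrm Rw Cl X n + bracket nrm Rw Cl Y n" using bracket_nonneg[OF fin] by (simp add: add_nonneg_nonneg)
  fix i i' assume i: "i \<in> fst ` Rw" "i' \<in> fst ` Cl" "i - i' = n"
  have "nrm (rowblk Rw i) (rowblk Cl i') (\<lambda>a a'. X (i, a) (i', a') - Y (i, a) (i', a'))
     \<le> nrm (rowblk Rw i) (rowblk Cl i') (\<lambda>a a'. X (i, a) (i', a')) + nrm (rowblk Rw i) (rowblk Cl i') (\<lambda>a a'. Y (i, a) (i', a'))"
    by (rule bn_diff[OF nrm rowblk_sub[OF sub(1)] rowblk_sub[OF sub(2)]])
  also have "\<dots> \<le> bracket nrm Rw Cl X n + bracket nrm Rw Cl Y n"
    using block_le_bracket[OF fin i(1,2), of nrm X] block_le_bracket[OF fin i(1,2), of nrm Y] i(3) by simp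
  finally show "nrm (rowblk Rw i) (rowblk Cl i') (\<lambda>a a'. X (i, a) (i', a') - Y (i, a) (i', a'))
     \<le> bracket nrm Rw Cl X n + bracket nrm Rw Cl Y n" .
qed

lemma tnorm_diff: assumes K: "K0 \<ge> 0" and nrm: "is_block_norm nrm" and fin: "finite Rw" "finite Cl" and sub: "SUBI Rw" "SUBI Cl"
  shows "tnorm K0 nrm Rw Cl s (\<lambda>k k'. X k k' - Y k k') \<le> tnorm K0 nrm Rw Cl s X + tnorm K0 nrm Rw Cl s Y"
proof -
  let ?D = "diffset Rw Cl"
  have "L2_set (\<lambda>n. bracket nrm Rw Cl (\<lambda>k k'. X k k' - Y k k') n * jb n powr s) ?D
     \<le> L2_set (\<lambda>n. bracket nrm Rw Cl X n * jb n powr s + bracket nrm Rw Cl Y n * jb n powr s) ?D"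
  proof (rule L2_set_mono)
    fix n
    show "0 \<le> bracket nrm Rw Cl (\<lambda>k k'. X k k' - Y k k') n * jb n powr s"
      using bracket_nonneg[OF fin] by simp
    have "bracket nrm Rw Cl (\<lambda>k k'. X k k' - Y k k') n * jb n powr s \<le> (bracket nrm Rw Cl X n + bracket nrm Rw Cl Y n) * jb n powr s"
      by (rule mult_right_mono[OF bracket_diff[OF nrm fin sub]]) simp
    then show "bracket nrm Rw Cl (\<lambda>k k'. X k k' - Y k k') n * jb n powr s \<le> bracket nrm Rw Cl X n * jb n powr s + bracket nrm Rw Cl Y n * jb n powr s"
      by (simp add: distrib_right)
  qed
  also have "\<dots> \<le> L2_set (\<lambda>n. bracket nrm Rw Cl X n * jb n powr s) ?D + L2_set (\<lambda>n. bracket nrm Rw Cl Y n * jb n powr s) ?D"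
    by (rule L2_set_triangle_ineq)
  finally have "sqrt K0 * L2_set (\<lambda>n. bracket nrm Rw Cl (\<lambda>k k'. X k k' - Y k k') n * jb n powr s) ?D
     \<le> sqrt K0 * (L2_set (\<lambda>n. bracket nrm Rw Cl X n * jb n powr s) ?D + L2_set (\<lambda>n. bracket nrm Rw Cl Y n * jb n powr s) ?D)"
    by (rule mult_left_mono) (simp add: K)
  then show ?thesis unfolding tnorm_L2[OF K] by (simp add: distrib_left)
qed

lemma bracket_cong: assumes nrm: "is_block_norm nrm" and sub: "SUBI Rw" "SUBI Cl"
  and eq: "\<And>k k'. k \<in> Rw \<Longrightarrow> k' \<in> Cl \<Longrightarrow> X k k' = Y k k'"
  shows "bracket nrm Rw Cl X = bracket nrm Rw Cl Y"
proof -
  have "nrm (rowblk Rw i) (rowblk Cl i') (\<lambda>a a'. X (i, a) (i', a')) = nrm (rowblk Rw i) (rowblk Cl i') (\<lambda>a a'. Y (i, a) (i', a'))" for i i'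
    by (rule bn_cong[OF nrm rowblk_sub[OF sub(1)] rowblk_sub[OF sub(2)]]) (auto simp: rowblk_def eq)
  then show ?thesis unfolding bracket_def by (intro ext) simp
qed

lemma tnorm_cong: assumes nrm: "is_block_norm nrm" and sub: "SUBI Rw" "SUBI Cl"
  and eq: "\<And>k k'. k \<in> Rw \<Longrightarrow> k' \<in> Cl \<Longrightarrow> X k k' = Y k k'"
  shows "tnorm K0 nrm Rw Cl s X = tnorm K0 nrm Rw Cl s Y"
  using bracket_cong[OF nrm sub eq] unfolding tnorm_def by simp

lemma tnorm_zero: assumes nrm: "is_block_norm nrm" and fin: "finite Rw" "finite Cl" and sub: "SUBI Rw" "SUBI Cl"
  and z: "\<And>k k'. k \<in> Rw \<Longrightarrow> k' \<in> Cl \<Longrightarrow> X k k' = 0"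
  shows "tnorm K0 nrm Rw Cl s X = 0"
proof -
  have "bracket nrm Rw Cl X n \<le> 0" for n
  proof (rule bracket_le[OF fin])
    fix i i' assume "i \<in> fst ` Rw" "i' \<in> fst ` Cl" "i - i' = n"
    have "nrm (rowblk Rw i) (rowblk Cl i') (\<lambda>a a'. X (i, a) (i', a')) = 0"
      using bn_zero[OF nrm rowblk_sub[OF sub(1)] rowblk_sub[OF sub(2)]] z by (auto simp: rowblk_def)
    then show "nrm (rowblk Rw i) (rowblk Cl i') (\<lambda>a a'. X (i, a) (i', a')) \<le> 0" by simp
  qed simp
  then have "bracket nrm Rw Cl X n = 0" for n using bracket_nonneg[OF fin, of nrm X n] by (meson order.antisym)
  then show ?thesis unfolding tnorm_def by simp
qed

lemma tnorm_zeroD: assumes K: "K0 > 0" and nrm: "is_block_norm nrm" and fin: "finite Rw" "finite Cl" and sub: "SUBI Rw" "SUBI Cl"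
  and t: "tnorm K0 nrm Rw Cl s X \<le> 0" and k: "k \<in> Rw" "k' \<in> Cl"
  shows "X k k' = 0"
proof -
  obtain i a i' a' where ka: "k = (i, a)" "k' = (i', a')" by (cases k, cases k') auto
  have t0: "tnorm K0 nrm Rw Cl s X = 0" using t tnorm_nonneg[of K0 nrm Rw Cl s X] K by simp
  let ?f = "\<lambda>n. (bracket nrm Rw Cl X n)\<^sup>2 * jb n powr (2 * s)"
  have "K0 * (\<Sum>n\<in>diffset Rw Cl. ?f n) = 0" using t0 unfolding tnorm_def by simp
  then have s0: "(\<Sum>n\<in>diffset Rw Cl. ?f n) = 0" using K by simp
  have "i - i' \<in> diffset Rw Cl" using k ka unfolding diffset_def by force
  then have "?f (i - i') = 0" using s0 sum_nonneg_eq_0_iff[OF diffset_finite[OF fin], of ?f] by simp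
  then have b0: "bracket nrm Rw Cl X (i - i') = 0" using jb_pos[of "i - i'"] by simp
  have ii: "i \<in> fst ` Rw" "i' \<in> fst ` Cl" using k ka by force+
  have "nrm (rowblk Rw i) (rowblk Cl i') (\<lambda>a a'. X (i, a) (i', a')) = 0"
    using block_le_bracket[OF fin ii, of nrm X] b0 bn_nonneg[OF nrm rowblk_sub[OF sub(1)] rowblk_sub[OF sub(2)], of i i' "\<lambda>a a'. X (i, a) (i', a')"]
    by linarith
  moreover have "a \<in> rowblk Rw i" "a' \<in> rowblk Cl i'" using k ka unfolding rowblk_def by auto
  ultimately show ?thesis using bn_zero[OF nrm rowblk_sub[OF sub(1)] rowblk_sub[OF sub(2)], of i i' "\<lambda>a a'. X (i, a) (i', a')"] ka by simp
qed


definition mmul :: "'b::finite idx set \<Rightarrow> 'b mat \<Rightarrow> 'b mat \<Rightarrow> 'b mat" where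
  "mmul Mid X Y = (\<lambda>k k''. \<Sum>k'\<in>Mid. X k k' * Y k' k'')"

lemma Mid_Sigma: "Mid = (SIGMA i':fst ` Mid. rowblk Mid i')"
  by (auto simp: rowblk_def image_iff) (metis fst_conv)

lemma rowblk_finite: "SUBI X \<Longrightarrow> finite (rowblk X i)"
  by (rule finite_subset[OF rowblk_sub]) auto

lemma block_mult:
  assumes nrm: "is_block_norm nrm" and fin: "finite Rw" "finite Mid" "finite Cl"
    and sub: "SUBI Rw" "SUBI Mid" "SUBI Cl"
    and i: "i \<in> fst ` Rw" "i'' \<in> fst ` Cl"
  shows "nrm (rowblk Rw i) (rowblk Cl i'') (\<lambda>a a''. mmul Mid X Y (i, a) (i'', a''))
     \<le> (\<Sum>i'\<in>fst ` Mid. bracket nrm Rw Mid X (i - i') * bracket nrm Mid Cl Y (i' - i''))"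
proof -
  let ?R = "rowblk Rw i" and ?T = "rowblk Cl i''"
  have R: "?R \<subseteq> {0,1}" and T: "?T \<subseteq> {0,1}" using rowblk_sub sub by auto
  have eq: "mmul Mid X Y (i, a) (i'', a'') = (\<Sum>i'\<in>fst ` Mid. \<Sum>a'\<in>rowblk Mid i'. X (i, a) (i', a') * Y (i', a') (i'', a''))" for a a''
  proof -
    have "(\<Sum>i'\<in>fst ` Mid. \<Sum>a'\<in>rowblk Mid i'. X (i, a) (i', a') * Y (i', a') (i'', a''))
       = (\<Sum>(i',a')\<in>(SIGMA i':fst ` Mid. rowblk Mid i'). X (i, a) (i', a') * Y (i', a') (i'', a''))"
      by (rule sum.Sigma) (use fin rowblk_finite[OF sub(2)] in auto)
    also have "\<dots> = (\<Sum>k'\<in>Mid. X (i, a) k' * Y k' (i'', a''))"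
      by (subst (2) Mid_Sigma) (simp add: case_prod_beta')
    finally show ?thesis unfolding mmul_def by simp
  qed
  have "nrm ?R ?T (\<lambda>a a''. mmul Mid X Y (i, a) (i'', a''))
      = nrm ?R ?T (\<lambda>a a''. \<Sum>i'\<in>fst ` Mid. \<Sum>a'\<in>rowblk Mid i'. X (i, a) (i', a') * Y (i', a') (i'', a''))"
    unfolding eq ..
  also have "\<dots> \<le> (\<Sum>i'\<in>fst ` Mid. nrm ?R ?T (\<lambda>a a''. \<Sum>a'\<in>rowblk Mid i'. X (i, a) (i', a') * Y (i', a') (i'', a'')))"
    by (rule bn_sum[OF nrm R T]) (use fin in simp)
  also have "\<dots> \<le> (\<Sum>i'\<in>fst ` Mid. bracket nrm Rw Mid X (i - i') * bracket nrm Mid Cl Y (i' - i''))"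
  proof (rule sum_mono)
    fix i' assume i': "i' \<in> fst ` Mid"
    have S: "rowblk Mid i' \<subseteq> {0,1}" using rowblk_sub sub by auto
    have m1: "nrm ?R ?T (\<lambda>a a''. \<Sum>a'\<in>rowblk Mid i'. X (i, a) (i', a') * Y (i', a') (i'', a''))
       \<le> nrm ?R (rowblk Mid i') (\<lambda>a a'. X (i, a) (i', a')) * nrm (rowblk Mid i') ?T (\<lambda>a' a''. Y (i', a') (i'', a''))"
      by (rule bn_mult[OF nrm R S T])
    have b1: "nrm ?R (rowblk Mid i') (\<lambda>a a'. X (i, a) (i', a')) \<le> bracket nrm Rw Mid X (i - i')"
      by (rule block_le_bracket[OF fin(1,2) i(1) i'])
    have b2: "nrm (rowblk Mid i') ?T (\<lambda>a' a''. Y (i', a') (i'', a'')) \<le> bracket nrm Mid Cl Y (i' - i'')"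
      by (rule block_le_bracket[OF fin(2,3) i' i(2)])
    have m2: "nrm ?R (rowblk Mid i') (\<lambda>a a'. X (i, a) (i', a')) * nrm (rowblk Mid i') ?T (\<lambda>a' a''. Y (i', a') (i'', a''))
        \<le> bracket nrm Rw Mid X (i - i') * bracket nrm Mid Cl Y (i' - i'')"
      by (rule mult_mono[OF b1 b2 bracket_nonneg[OF fin(1,2)] bn_nonneg[OF nrm S T]])
    from order.trans[OF m1 m2] show "nrm ?R ?T (\<lambda>a a''. \<Sum>a'\<in>rowblk Mid i'. X (i, a) (i', a') * Y (i', a') (i'', a''))
       \<le> bracket nrm Rw Mid X (i - i') * bracket nrm Mid Cl Y (i' - i'')" .
  qed
  finally show ?thesis .
qed

lemma bracket_mult:
  assumes nrm: "is_block_norm nrm" and fin: "finite Rw" "finite Mid" "finite Cl"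
    and sub: "SUBI Rw" "SUBI Mid" "SUBI Cl"
  shows "bracket nrm Rw Cl (mmul Mid X Y) n
     \<le> (\<Sum>j\<in>{j. bracket nrm Rw Mid X j \<noteq> 0}. bracket nrm Rw Mid X j * bracket nrm Mid Cl Y (n - j))"
    (is "_ \<le> ?c")
proof (rule bracket_le[OF fin(1,3)])
  let ?a = "bracket nrm Rw Mid X" and ?b = "bracket nrm Mid Cl Y"
  let ?S = "{j. ?a j \<noteq> 0}"
  have finS: "finite ?S"
    by (rule finite_subset[OF _ diffset_finite[OF fin(1,2)]]) (use bracket_out in blast)
  have nn: "0 \<le> ?a j * ?b (n - j)" for j
    using bracket_nonneg[OF fin(1,2), of nrm X j] bracket_nonneg[OF fin(2,3), of nrm Y "n-j"] by simp
  show "0 \<le> ?c" by (rule sum_nonneg) (use nn in auto)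
  fix i i'' assume i: "i \<in> fst ` Rw" "i'' \<in> fst ` Cl" "i - i'' = n"
  have "nrm (rowblk Rw i) (rowblk Cl i'') (\<lambda>a a''. mmul Mid X Y (i, a) (i'', a''))
     \<le> (\<Sum>i'\<in>fst ` Mid. ?a (i - i') * ?b (i' - i''))"
    by (rule block_mult[OF nrm fin sub i(1,2)])
  also have "\<dots> = (\<Sum>i'\<in>fst ` Mid. ?a (i - i') * ?b (n - (i - i')))"
    using i(3) by (intro sum.cong refl) (simp add: algebra_simps)
  also have "\<dots> = (\<Sum>j\<in>(\<lambda>i'. i - i') ` fst ` Mid. ?a j * ?b (n - j))"
    by (subst sum.reindex) (auto simp: inj_on_def)
  also have "\<dots> = (\<Sum>j\<in>(\<lambda>i'. i - i') ` fst ` Mid \<inter> ?S. ?a j * ?b (n - j))"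
    by (rule sum.mono_neutral_right) (use fin in auto)
  also have "\<dots> \<le> ?c"
    by (rule sum_mono2[OF finS]) (use nn in auto)
  finally show "nrm (rowblk Rw i) (rowblk Cl i'') (\<lambda>a a''. mmul Mid X Y (i, a) (i'', a'')) \<le> ?c" .
qed


lemmas sobD0 = sobolev_ok_def[THEN iffD1]

lemma sob_K0: "sobolev_ok K0 s0 Cs T \<Longrightarrow> K0 > 0"
  using sobD0 by blast
lemma sob_Cs0: "sobolev_ok K0 s0 Cs T \<Longrightarrow> Cs s0 = 1"
  using sobD0 by blast
lemma sob_Cs: "sobolev_ok K0 s0 Cs T \<Longrightarrow> s \<ge> s0 \<Longrightarrow> Cs s \<ge> 1"
  using sobD0 by blast
lemma sob_mult: assumes "sobolev_ok K0 s0 Cs TYPE('b::finite)"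
  "finite {i. u1 i \<noteq> 0}" "finite {i. u2 i \<noteq> 0}" "s \<ge> s0"
  shows "sob_norm K0 s (conv u1 u2) \<le> 1/2 * sob_norm K0 s0 u1 * sob_norm K0 s u2
                                      + Cs s / 2 * sob_norm K0 s u1 * sob_norm K0 s0 (u2 :: int ^ 'b \<Rightarrow> complex)"
  using sobD0[OF assms(1), THEN conjunct2, THEN conjunct2, THEN conjunct2, THEN conjunct2] assms(2-4) by blast

lemma supp_bracket_sub: "{i. bracket nrm Rw Cl X i \<noteq> 0} \<subseteq> diffset Rw Cl"
  by (metis (mono_tags, lifting) bracket_out mem_Collect_eq subsetI)

lemma supp_bracket_finite: "finite Rw \<Longrightarrow> finite Cl \<Longrightarrow> finite {i. bracket nrm Rw Cl X i \<noteq> 0}"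
  by (rule finite_subset[OF supp_bracket_sub diffset_finite])

lemma tnorm_sob: assumes fin: "finite Rw" "finite Cl"
  shows "tnorm K0 nrm Rw Cl s X = sob_norm K0 s (\<lambda>n. complex_of_real (bracket nrm Rw Cl X n))"
proof -
  let ?b = "bracket nrm Rw Cl X"
  have "(\<Sum>n\<in>diffset Rw Cl. (?b n)\<^sup>2 * jb n powr (2 * s)) = (\<Sum>n\<in>{i. ?b i \<noteq> 0}. (?b n)\<^sup>2 * jb n powr (2 * s))"
    by (rule sum.mono_neutral_right[OF diffset_finite[OF fin] supp_bracket_sub]) auto
  then show ?thesis unfolding tnorm_def sob_norm_def by simp
qed

lemma tnorm_mult:
  assumes sob: "sobolev_ok K0 s0 Cs TYPE('b::finite)" and nrm: "is_block_norm nrm"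
    and fin: "finite Rw" "finite Mid" "finite Cl"
    and sub: "SUBI Rw" "SUBI Mid" "SUBI Cl" and s: "s \<ge> s0"
  shows "tnorm K0 nrm Rw Cl s (mmul Mid X Y)
     \<le> 1/2 * tnorm K0 nrm Rw Mid s0 X * tnorm K0 nrm Mid Cl s Y
       + Cs s / 2 * tnorm K0 nrm Rw Mid s X * tnorm K0 nrm Mid Cl s0 (Y :: 'b mat)"
proof -
  let ?a = "bracket nrm Rw Mid X" and ?bb = "bracket nrm Mid Cl Y" and ?br = "bracket nrm Rw Cl (mmul Mid X Y)"
  define u where "u = (\<lambda>n. complex_of_real (?a n))"
  define v where "v = (\<lambda>n. complex_of_real (?bb n))"
  define c where "c = (\<lambda>n. \<Sum>j\<in>{j. ?a j \<noteq> 0}. ?a j * ?bb (n - j))"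
  have K: "K0 > 0" using sob_K0[OF sob] .
  have su: "{i. u i \<noteq> 0} = {i. ?a i \<noteq> 0}" unfolding u_def by simp
  have sv: "{i. v i \<noteq> 0} = {i. ?bb i \<noteq> 0}" unfolding v_def by simp
  have fu: "finite {i. u i \<noteq> 0}" unfolding su by (rule supp_bracket_finite[OF fin(1,2)])
  have fv: "finite {i. v i \<noteq> 0}" unfolding sv by (rule supp_bracket_finite[OF fin(2,3)])
  have convc: "conv u v = (\<lambda>n. complex_of_real (c n))"
    unfolding conv_def su c_def by (simp add: u_def v_def)
  have c_nn: "c n \<ge> 0" for n
    unfolding c_def using bracket_nonneg[OF fin(1,2), of nrm X] bracket_nonneg[OF fin(2,3), of nrm Y]
    by (intro sum_nonneg) (simp add: mult_nonneg_nonneg)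
  have br_le: "?br n \<le> c n" for n unfolding c_def by (rule bracket_mult[OF nrm fin sub])
  have br_nn: "?br n \<ge> 0" for n by (rule bracket_nonneg[OF fin(1,3)])
  have fc: "finite {n. c n \<noteq> 0}"
  proof (rule finite_subset)
    show "{n. c n \<noteq> 0} \<subseteq> (\<lambda>(x,y). x + y) ` ({j. ?a j \<noteq> 0} \<times> {j. ?bb j \<noteq> 0})"
    proof
      fix n assume "n \<in> {n. c n \<noteq> 0}"
      then have "c n \<noteq> 0" by simp
      then obtain j where j: "j \<in> {j. ?a j \<noteq> 0}" "?a j * ?bb (n - j) \<noteq> 0"
        unfolding c_def by (meson sum.neutral)
      then have "(j, n - j) \<in> {j. ?a j \<noteq> 0} \<times> {j. ?bb j \<noteq> 0}" by simp
      moreover have "n = (\<lambda>(x,y). x + y) (j, n - j)" by simp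
      ultimately show "n \<in> (\<lambda>(x,y). x + y) ` ({j. ?a j \<noteq> 0} \<times> {j. ?bb j \<noteq> 0})" by blast
    qed
    show "finite ((\<lambda>(x,y). x + y) ` ({j. ?a j \<noteq> 0} \<times> {j. ?bb j \<noteq> 0}))"
      using supp_bracket_finite[OF fin(1,2)] supp_bracket_finite[OF fin(2,3)] by auto
  qed
  let ?w = "\<lambda>n. jb n powr (2 * s)"
  have "(\<Sum>n\<in>diffset Rw Cl. (?br n)\<^sup>2 * ?w n) \<le> (\<Sum>n\<in>diffset Rw Cl. if n \<in> {n. c n \<noteq> 0} then (c n)\<^sup>2 * ?w n else 0)"
  proof (rule sum_mono)
    fix n
    show "(?br n)\<^sup>2 * ?w n \<le> (if n \<in> {n. c n \<noteq> 0} then (c n)\<^sup>2 * ?w n else 0)"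
    proof (cases "c n = 0")
      case True
      then have "?br n = 0" using br_le[of n] br_nn[of n] by simp
      then show ?thesis using True by simp
    next
      case False
      have "(?br n)\<^sup>2 \<le> (c n)\<^sup>2" by (rule power_mono[OF br_le br_nn])
      then show ?thesis using False by (simp add: mult_right_mono)
    qed
  qed
  also have "\<dots> = (\<Sum>n\<in>diffset Rw Cl \<inter> {n. c n \<noteq> 0}. (c n)\<^sup>2 * ?w n)"
    by (rule sum.inter_restrict[symmetric, OF diffset_finite[OF fin(1,3)]])
  also have "\<dots> \<le> (\<Sum>n\<in>{n. c n \<noteq> 0}. (c n)\<^sup>2 * ?w n)"
    by (rule sum_mono2[OF fc]) auto
  finally have "K0 * (\<Sum>n\<in>diffset Rw Cl. (?br n)\<^sup>2 * ?w n) \<le> K0 * (\<Sum>n\<in>{n. c n \<noteq> 0}. (c n)\<^sup>2 * ?w n)"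
    using K by simp
  then have "tnorm K0 nrm Rw Cl s (mmul Mid X Y) \<le> sob_norm K0 s (conv u v)"
    unfolding tnorm_def sob_norm_def convc using c_nn by (simp add: real_sqrt_le_mono)
  also have "\<dots> \<le> 1/2 * sob_norm K0 s0 u * sob_norm K0 s v + Cs s / 2 * sob_norm K0 s u * sob_norm K0 s0 v"
    by (rule sob_mult[OF sob fu fv s])
  also have "\<dots> = 1/2 * tnorm K0 nrm Rw Mid s0 X * tnorm K0 nrm Mid Cl s Y
       + Cs s / 2 * tnorm K0 nrm Rw Mid s X * tnorm K0 nrm Mid Cl s0 Y"
    unfolding u_def v_def tnorm_sob[OF fin(1,2)] tnorm_sob[OF fin(2,3)] ..
  finally show ?thesis .
qed

lemma tnorm_mult0:
  assumes sob: "sobolev_ok K0 s0 Cs TYPE('b::finite)" and nrm: "is_block_norm nrm"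
    and fin: "finite Rw" "finite Mid" "finite Cl"
    and sub: "SUBI Rw" "SUBI Mid" "SUBI Cl"
  shows "tnorm K0 nrm Rw Cl s0 (mmul Mid X Y) \<le> tnorm K0 nrm Rw Mid s0 X * tnorm K0 nrm Mid Cl s0 (Y :: 'b mat)"
  using tnorm_mult[OF sob nrm fin sub order.refl, of X Y] sob_Cs0[OF sob] by (simp add: algebra_simps)


lemma delta_sum: "i < (n::nat) \<Longrightarrow> (\<Sum>j\<in>{0..<n}. ((if i = j then 1 else 0) + g j) * (w j::complex)) = w i + (\<Sum>j\<in>{0..<n}. g j * w j)"
proof -
  assume i: "i < n"
  have "(\<Sum>j\<in>{0..<n}. (if i = j then 1 else 0) * w j) = (\<Sum>j\<in>{0..<n}. if i = j then w j else 0)"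
    by (rule sum.cong) auto
  also have "\<dots> = w i" using sum.delta'[of "{0..<n}" i w] i by simp
  finally show ?thesis by (simp add: distrib_right sum.distrib)
qed

lemma exist_rinv:
  fixes A :: "'a \<Rightarrow> 'a \<Rightarrow> complex"
  assumes fin: "finite B"
    and inj: "\<And>x. (\<forall>k\<in>B. x k + (\<Sum>j\<in>B. A k j * x j) = 0) \<Longrightarrow> \<forall>k\<in>B. x k = 0"
  shows "\<exists>R. \<forall>k\<in>B. \<forall>k'\<in>B. R k k' + (\<Sum>j\<in>B. A k j * R j k') = (if k = k' then 1 else 0)"
proof -
  define n where "n = card B"
  obtain e where e: "bij_betw e {0..<n} B" using ex_bij_betw_nat_finite[OF fin] unfolding n_def by blast
  define f where "f = the_inv_into {0..<n} e"
  have fe: "i < n \<Longrightarrow> f (e i) = i" for i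
    unfolding f_def using e by (simp add: bij_betw_def the_inv_into_f_f)
  have ef: "k \<in> B \<Longrightarrow> e (f k) = k" for k
    unfolding f_def using e f_the_inv_into_f_bij_betw by fastforce
  have fB: "k \<in> B \<Longrightarrow> f k < n" for k
    unfolding f_def using e bij_betw_the_inv_into bij_betwE by fastforce
  have eB: "i < n \<Longrightarrow> e i \<in> B" for i using e bij_betwE by fastforce
  have reidx: "(\<Sum>j\<in>B. g j) = (\<Sum>i\<in>{0..<n}. g (e i))" for g :: "'a \<Rightarrow> complex"
    using sum.reindex_bij_betw[OF e, of g] by simp
  define AA :: "complex Matrix.mat" where "AA = Matrix.mat n n (\<lambda>(i,j). (if i = j then 1 else 0) + A (e i) (e j))"
  have AAc: "AA \<in> carrier_mat n n" unfolding AA_def by simp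
  have det: "Determinant.det AA \<noteq> 0"
  proof
    assume "Determinant.det AA = 0"
    then obtain v where v: "v \<in> carrier_vec n" "v \<noteq> 0\<^sub>v n" "AA *\<^sub>v v = 0\<^sub>v n"
      using det_0_iff_vec_prod_zero[OF AAc] by blast
    define x where "x k = vec_index v (f k)" for k
    have "\<forall>k\<in>B. x k + (\<Sum>j\<in>B. A k j * x j) = 0"
    proof
      fix k assume k: "k \<in> B"
      let ?i = "f k"
      have i: "?i < n" using fB[OF k] .
      have "vec_index (AA *\<^sub>v v) ?i = 0" using v(3) i by simp
      moreover have "vec_index (AA *\<^sub>v v) ?i = (\<Sum>j\<in>{0..<n}. ((if ?i = j then 1 else 0) + A (e ?i) (e j)) * vec_index v j)"
        using i v(1) unfolding AA_def by (simp add: scalar_prod_def)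
      moreover have "\<dots> = vec_index v ?i + (\<Sum>j\<in>{0..<n}. A (e ?i) (e j) * vec_index v j)"
        by (rule delta_sum[OF i])
      moreover have "x k + (\<Sum>j\<in>B. A k j * x j) = vec_index v ?i + (\<Sum>j\<in>{0..<n}. A (e ?i) (e j) * vec_index v j)"
        unfolding reidx x_def using ef[OF k] fe by simp
      ultimately show "x k + (\<Sum>j\<in>B. A k j * x j) = 0" by simp
    qed
    from inj[OF this] have "vec_index v i = 0" if "i < n" for i
      using that fe[of i] eB[of i] unfolding x_def by force
    then have "v = 0\<^sub>v n" using v(1) by (intro eq_vecI) auto
    with v(2) show False by simp
  qed
  from det_non_zero_imp_unit[OF AAc det, of "()"]
  obtain Q where Q: "Q \<in> carrier_mat n n" "AA * Q = 1\<^sub>m n"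
    unfolding Units_def ring_mat_def by auto
  define R where "R k k' = Q $$ (f k, f k')" for k k'
  show ?thesis
  proof (intro exI ballI)
    fix k k' assume k: "k \<in> B" and k': "k' \<in> B"
    let ?i = "f k" and ?i' = "f k'"
    have i: "?i < n" "?i' < n" using fB k k' by auto
    have "(AA * Q) $$ (?i, ?i') = (if ?i = ?i' then 1 else 0)" using Q(2) i by simp
    moreover have "(AA * Q) $$ (?i, ?i') = (\<Sum>j\<in>{0..<n}. ((if ?i = j then 1 else 0) + A (e ?i) (e j)) * Q $$ (j, ?i'))"
      using i Q(1) unfolding AA_def by (simp add: scalar_prod_def)
    moreover have "\<dots> = Q $$ (?i, ?i') + (\<Sum>j\<in>{0..<n}. A (e ?i) (e j) * Q $$ (j, ?i'))"
      by (rule delta_sum[OF i(1)])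
    moreover have "R k k' + (\<Sum>j\<in>B. A k j * R j k') = Q $$ (?i, ?i') + (\<Sum>j\<in>{0..<n}. A (e ?i) (e j) * Q $$ (j, ?i'))"
      unfolding reidx R_def using ef[OF k] fe by simp
    moreover have "(?i = ?i') = (k = k')" using ef k k' by metis
    ultimately show "R k k' + (\<Sum>j\<in>B. A k j * R j k') = (if k = k' then 1 else 0)" by simp
  qed
qed


lemma sum_swap_mult:
  fixes F :: "'a \<Rightarrow> complex" and G :: "'a \<Rightarrow> 'b \<Rightarrow> complex" and H :: "'b \<Rightarrow> complex"
  shows "(\<Sum>j\<in>J. F j * (\<Sum>m\<in>Mm. G j m * H m)) = (\<Sum>m\<in>Mm. (\<Sum>j\<in>J. F j * G j m) * H m)"
proof -
  have "(\<Sum>j\<in>J. F j * (\<Sum>m\<in>Mm. G j m * H m)) = (\<Sum>j\<in>J. \<Sum>m\<in>Mm. F j * G j m * H m)"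
    by (simp add: sum_distrib_left mult.assoc)
  also have "\<dots> = (\<Sum>m\<in>Mm. \<Sum>j\<in>J. F j * G j m * H m)" by (rule sum.swap)
  also have "\<dots> = (\<Sum>m\<in>Mm. (\<Sum>j\<in>J. F j * G j m) * H m)" by (simp add: sum_distrib_right)
  finally show ?thesis .
qed

lemma construct:
  fixes M N P :: "'a \<Rightarrow> 'a \<Rightarrow> complex"
  assumes finB: "finite B" and finC: "finite C"
    and linv: "\<forall>k\<in>B. \<forall>k'\<in>B. (\<Sum>j\<in>C. N k j * M j k') = (if k = k' then 1 else 0)"
    and inj: "\<And>x. (\<forall>k\<in>B. x k + (\<Sum>j\<in>B. (\<Sum>c\<in>C. N k c * P c j) * x j) = 0) \<Longrightarrow> \<forall>k\<in>B. x k = 0"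
  shows "\<exists>NP. (\<forall>k\<in>B. \<forall>k'\<in>B. (\<Sum>j\<in>C. NP k j * (M j k' + P j k')) = (if k = k' then 1 else 0)) \<and>
    (\<forall>k\<in>B. \<forall>c\<in>C. NP k c = N k c - (\<Sum>c'\<in>C. N k c' * (\<Sum>j\<in>B. P c' j * NP j c)))"
proof -
  define A where "A k j = (\<Sum>c\<in>C. N k c * P c j)" for k j
  obtain R where R: "\<forall>k\<in>B. \<forall>k'\<in>B. R k k' + (\<Sum>j\<in>B. A k j * R j k') = (if k = k' then 1 else 0)"
    using exist_rinv[OF finB, of A] inj unfolding A_def by blast
  define NP where "NP k c = (\<Sum>m\<in>B. R k m * N m c)" for k c
  have E2: "(\<Sum>j\<in>B. A k j * G j) = (\<Sum>c'\<in>C. N k c' * (\<Sum>j\<in>B. P c' j * G j))" for k G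
    unfolding A_def using sum_swap_mult[of "N k" P G B C] by simp
  have E1: "NP k c + (\<Sum>j\<in>B. A k j * NP j c) = N k c" if k: "k \<in> B" for k c
  proof -
    have "(\<Sum>j\<in>B. A k j * NP j c) = (\<Sum>m\<in>B. (\<Sum>j\<in>B. A k j * R j m) * N m c)"
      unfolding NP_def by (rule sum_swap_mult)
    then have "NP k c + (\<Sum>j\<in>B. A k j * NP j c) = (\<Sum>m\<in>B. (R k m + (\<Sum>j\<in>B. A k j * R j m)) * N m c)"
      unfolding NP_def by (simp add: distrib_right sum.distrib)
    also have "\<dots> = (\<Sum>m\<in>B. (if k = m then N m c else 0))"
      by (rule sum.cong) (use R k in auto)
    also have "\<dots> = N k c" using finB k by simp
    finally show ?thesis .
  qed
  have NPeq: "NP k c = N k c - (\<Sum>j\<in>B. A k j * NP j c)" if "k \<in> B" for k c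
    using E1[OF that, of c] by (simp add: algebra_simps)
  define Z where "Z k k' = (\<Sum>j\<in>C. NP k j * (M j k' + P j k'))" for k k'
  have Zeq: "Z k k' = (if k = k' then 1 else 0) + A k k' - (\<Sum>j\<in>B. A k j * Z j k')" if k: "k \<in> B" and k': "k' \<in> B" for k k'
  proof -
    have "Z k k' = (\<Sum>c\<in>C. (N k c - (\<Sum>j\<in>B. A k j * NP j c)) * (M c k' + P c k'))"
      unfolding Z_def using NPeq[OF k] by simp
    also have "\<dots> = (\<Sum>c\<in>C. N k c * M c k') + (\<Sum>c\<in>C. N k c * P c k') - (\<Sum>c\<in>C. (\<Sum>j\<in>B. A k j * NP j c) * (M c k' + P c k'))"
      by (simp add: algebra_simps sum.distrib sum_subtractf)
    also have "(\<Sum>c\<in>C. (\<Sum>j\<in>B. A k j * NP j c) * (M c k' + P c k')) = (\<Sum>j\<in>B. A k j * Z j k')"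
      unfolding Z_def using sum_swap_mult[of "A k" NP "\<lambda>c. M c k' + P c k'" C B] by simp
    finally show ?thesis using linv k k' unfolding A_def by simp
  qed
  have "\<forall>k\<in>B. \<forall>k'\<in>B. Z k k' = (if k = k' then 1 else 0)"
  proof (intro ballI)
    fix k0 k' assume k0: "k0 \<in> B" and k': "k' \<in> B"
    define w where "w j = Z j k' - (if j = k' then 1 else 0)" for j
    have "\<forall>k\<in>B. w k + (\<Sum>j\<in>B. A k j * w j) = 0"
    proof
      fix k assume k: "k \<in> B"
      have "(\<Sum>j\<in>B. A k j * w j) = (\<Sum>j\<in>B. A k j * Z j k' - (if j = k' then A k j else 0))"
        by (rule sum.cong) (auto simp: w_def algebra_simps)
      also have "\<dots> = (\<Sum>j\<in>B. A k j * Z j k') - (\<Sum>j\<in>B. if j = k' then A k j else 0)"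
        by (rule sum_subtractf)
      also have "(\<Sum>j\<in>B. if j = k' then A k j else 0) = A k k'" using finB k' by simp
      finally show "w k + (\<Sum>j\<in>B. A k j * w j) = 0" unfolding w_def using Zeq[OF k k'] by simp
    qed
    from inj[OF this[unfolded A_def]] have "w k0 = 0" using k0 by blast
    then show "Z k0 k' = (if k0 = k' then 1 else 0)" unfolding w_def by simp
  qed
  moreover have "\<forall>k\<in>B. \<forall>c\<in>C. NP k c = N k c - (\<Sum>c'\<in>C. N k c' * (\<Sum>j\<in>B. P c' j * NP j c))"
    using NPeq E2 by simp
  ultimately show ?thesis unfolding Z_def by blast
qed


lemma tnorm_0_le: assumes K: "K0 \<ge> 0" and s: "s \<ge> 0"
  shows "tnorm K0 nrm Rw Cl 0 X \<le> tnorm K0 nrm Rw Cl s X"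
proof -
  have trm: "(bracket nrm Rw Cl X n)\<^sup>2 * jb n powr (2 * 0) \<le> (bracket nrm Rw Cl X n)\<^sup>2 * jb n powr (2 * s)" for n
  proof -
    have "jb n powr (2 * 0) = 1" using jb_pos[of n] by simp
    also have "1 \<le> jb n powr (2 * s)" using jb_ge1[of n] s by (intro ge_one_powr_ge_zero) auto
    finally show ?thesis by (rule mult_left_mono) simp
  qed
  have "(\<Sum>n\<in>diffset Rw Cl. (bracket nrm Rw Cl X n)\<^sup>2 * jb n powr (2 * 0))
     \<le> (\<Sum>n\<in>diffset Rw Cl. (bracket nrm Rw Cl X n)\<^sup>2 * jb n powr (2 * s))"
  proof (rule sum_mono)
    fix n show "(bracket nrm Rw Cl X n)\<^sup>2 * jb n powr (2 * 0) \<le> (bracket nrm Rw Cl X n)\<^sup>2 * jb n powr (2 * s)"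
      using trm by blast
  qed
  then have "K0 * (\<Sum>n\<in>diffset Rw Cl. (bracket nrm Rw Cl X n)\<^sup>2 * jb n powr (2 * 0))
     \<le> K0 * (\<Sum>n\<in>diffset Rw Cl. (bracket nrm Rw Cl X n)\<^sup>2 * jb n powr (2 * s))"
    by (rule mult_left_mono[OF _ K])
  then show ?thesis unfolding tnorm_def by (rule real_sqrt_le_mono)
qed

lemma tnorm_s_le: assumes K: "K0 \<ge> 0"
  shows "tnorm K0 nrm Rw Cl s X \<le> sqrt (\<Sum>n\<in>diffset Rw Cl. jb n powr (2 * s)) * tnorm K0 nrm Rw Cl 0 X"
proof (cases "finite (diffset Rw Cl)")
  case False
  then show ?thesis unfolding tnorm_def by simp
next
  case True
  let ?W = "\<Sum>n\<in>diffset Rw Cl. jb n powr (2 * s)"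
  have "(\<Sum>n\<in>diffset Rw Cl. (bracket nrm Rw Cl X n)\<^sup>2 * jb n powr (2 * s))
     \<le> (\<Sum>n\<in>diffset Rw Cl. (bracket nrm Rw Cl X n)\<^sup>2 * ?W)"
  proof (rule sum_mono)
    fix n assume n: "n \<in> diffset Rw Cl"
    have "jb n powr (2 * s) \<le> ?W" by (rule member_le_sum[OF n _ True]) simp
    then show "(bracket nrm Rw Cl X n)\<^sup>2 * jb n powr (2 * s) \<le> (bracket nrm Rw Cl X n)\<^sup>2 * ?W"
      by (rule mult_left_mono) simp
  qed
  also have "\<dots> = (\<Sum>n\<in>diffset Rw Cl. ?W * ((bracket nrm Rw Cl X n)\<^sup>2 * jb n powr (2 * 0)))"
  proof (rule sum.cong[OF refl])
    fix n assume "n \<in> diffset Rw Cl"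
    have "jb n powr (2 * 0) = 1" using jb_pos[of n] by simp
    then show "(bracket nrm Rw Cl X n)\<^sup>2 * ?W = ?W * ((bracket nrm Rw Cl X n)\<^sup>2 * jb n powr (2 * 0))" by simp
  qed
  also have "\<dots> = ?W * (\<Sum>n\<in>diffset Rw Cl. (bracket nrm Rw Cl X n)\<^sup>2 * jb n powr (2 * 0))"
    by (rule sum_distrib_left[symmetric])
  finally have "K0 * (\<Sum>n\<in>diffset Rw Cl. (bracket nrm Rw Cl X n)\<^sup>2 * jb n powr (2 * s))
     \<le> K0 * (?W * (\<Sum>n\<in>diffset Rw Cl. (bracket nrm Rw Cl X n)\<^sup>2 * jb n powr (2 * 0)))"
    by (rule mult_left_mono[OF _ K])
  also have "\<dots> = ?W * (K0 * (\<Sum>n\<in>diffset Rw Cl. (bracket nrm Rw Cl X n)\<^sup>2 * jb n powr (2 * 0)))"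
    by (rule mult.left_commute)
  finally have "sqrt (K0 * (\<Sum>n\<in>diffset Rw Cl. (bracket nrm Rw Cl X n)\<^sup>2 * jb n powr (2 * s)))
     \<le> sqrt (?W * (K0 * (\<Sum>n\<in>diffset Rw Cl. (bracket nrm Rw Cl X n)\<^sup>2 * jb n powr (2 * 0))))"
    by (rule real_sqrt_le_mono)
  then show ?thesis unfolding tnorm_def real_sqrt_mult[of ?W] .
qed

lemma SUBI00: "SUBI {(0::int^'b::finite, 0::nat)}" by auto

lemma matvec_mmul: "(\<lambda>k k'. matvec Cl X h k) = mmul Cl X (\<lambda>k k'. h k)"
  unfolding matvec_def mmul_def by simp

lemma op_bound:
  assumes sob: "sobolev_ok K0 s0 Cs TYPE('b::finite)" and s0: "s0 > 0" and nrm: "is_block_norm nrm"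
    and fin: "finite Rw" "finite Cl" and sub: "SUBI Rw" "SUBI Cl"
  shows "opnorm0 K0 nrm Rw Cl (X :: 'b mat) \<ge> 0 \<and>
     (\<forall>h. vnorm0 K0 nrm Rw (matvec Cl X h) \<le> opnorm0 K0 nrm Rw Cl X * vnorm0 K0 nrm Cl h)"
proof -
  have K: "K0 > 0" using sob_K0[OF sob] .
  let ?O = "{(0::int^'b, 0::nat)}"
  have fO: "finite ?O" by simp
  let ?S = "{vnorm0 K0 nrm Rw (matvec Cl X h) / vnorm0 K0 nrm Cl h | h. \<exists>k\<in>Cl. h k \<noteq> 0}"
  let ?T = "tnorm K0 nrm Rw Cl s0 X * sqrt (\<Sum>n\<in>diffset Cl ?O. jb n powr (2 * s0))"
  have vpos: "vnorm0 K0 nrm Cl h > 0" if "\<exists>k\<in>Cl. h k \<noteq> 0" for h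
  proof (rule ccontr)
    assume "\<not> vnorm0 K0 nrm Cl h > 0"
    then have "tnorm K0 nrm Cl ?O 0 (\<lambda>k k'. h k) \<le> 0" unfolding vnorm0_def by simp
    from tnorm_zeroD[OF K nrm fin(2) fO sub(2) SUBI00 this] that show False by auto
  qed
  have key: "vnorm0 K0 nrm Rw (matvec Cl X h) \<le> ?T * vnorm0 K0 nrm Cl h" for h
  proof -
    have "vnorm0 K0 nrm Rw (matvec Cl X h) = tnorm K0 nrm Rw ?O 0 (mmul Cl X (\<lambda>k k'. h k))"
      unfolding vnorm0_def matvec_mmul ..
    also have "\<dots> \<le> tnorm K0 nrm Rw ?O s0 (mmul Cl X (\<lambda>k k'. h k))"
      by (rule tnorm_0_le) (use K s0 in auto)
    also have "\<dots> \<le> tnorm K0 nrm Rw Cl s0 X * tnorm K0 nrm Cl ?O s0 (\<lambda>k k'. h k)"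
      by (rule tnorm_mult0[OF sob nrm fin(1,2) fO sub(1,2) SUBI00])
    also have "\<dots> \<le> tnorm K0 nrm Rw Cl s0 X * (sqrt (\<Sum>n\<in>diffset Cl ?O. jb n powr (2 * s0)) * tnorm K0 nrm Cl ?O 0 (\<lambda>k k'. h k))"
      by (rule mult_left_mono[OF tnorm_s_le tnorm_nonneg]) (use K in auto)
    finally show ?thesis unfolding vnorm0_def by (simp add: mult.assoc)
  qed
  have Tnn: "?T \<ge> 0" by (intro mult_nonneg_nonneg tnorm_nonneg real_sqrt_ge_zero sum_nonneg) (use K in auto)
  have bdd: "bdd_above (insert 0 ?S)"
  proof (rule bdd_aboveI)
    fix r assume "r \<in> insert 0 ?S"
    then consider "r = 0" | h where "r = vnorm0 K0 nrm Rw (matvec Cl X h) / vnorm0 K0 nrm Cl h" "\<exists>k\<in>Cl. h k \<noteq> 0"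
      by blast
    then show "r \<le> ?T"
    proof cases
      case 1 then show ?thesis using Tnn by simp
    next
      case (2 h)
      then show ?thesis using key[of h] vpos[OF 2(2)] by (simp add: divide_le_eq)
    qed
  qed
  have O0: "opnorm0 K0 nrm Rw Cl X \<ge> 0" unfolding opnorm0_def by (rule cSup_upper[OF insertI1 bdd])
  have "vnorm0 K0 nrm Rw (matvec Cl X h) \<le> opnorm0 K0 nrm Rw Cl X * vnorm0 K0 nrm Cl h" for h
  proof (cases "\<exists>k\<in>Cl. h k \<noteq> 0")
    case True
    have "vnorm0 K0 nrm Rw (matvec Cl X h) / vnorm0 K0 nrm Cl h \<le> opnorm0 K0 nrm Rw Cl X"
      unfolding opnorm0_def by (rule cSup_upper[OF _ bdd]) (use True in blast)
    then show ?thesis using vpos[OF True] by (simp add: divide_le_eq)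
  next
    case False
    have "vnorm0 K0 nrm Rw (matvec Cl X h) = 0" unfolding vnorm0_def
      by (rule tnorm_zero[OF nrm fin(1) fO sub(1) SUBI00]) (use False in \<open>simp add: matvec_def\<close>)
    moreover have "vnorm0 K0 nrm Cl h \<ge> 0" unfolding vnorm0_def by (rule tnorm_nonneg) (use K in simp)
    ultimately show ?thesis using O0 by simp
  qed
  with O0 show ?thesis by blast
qed


lemma arith0: fixes x0 n0 p0 :: real
  assumes "0 \<le> x0" "n0 * p0 \<le> 1/2" "x0 \<le> n0 + n0 * p0 * x0"
  shows "x0 \<le> 2 * n0"
proof -
  have "n0 * p0 * x0 \<le> 1/2 * x0" by (rule mult_right_mono[OF assms(2,1)])
  then show ?thesis using assms(3) by linarith
qed

lemma arith_comb: fixes xs ns ts qs q0 x0 n0 p0 ps C :: real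
  assumes nn: "0 \<le> n0" "0 \<le> p0" "0 \<le> ns" "0 \<le> ps" "0 \<le> C" "0 \<le> x0"
    and h: "xs \<le> ns + ts" "ts \<le> 1/2 * n0 * qs + C/2 * ns * q0" "qs \<le> 1/2 * p0 * xs + C/2 * ps * x0"
      "q0 \<le> p0 * x0" "x0 \<le> 2 * n0"
  shows "xs \<le> ns + n0 * p0 * xs / 4 + C/2 * n0\<^sup>2 * ps + C * (n0 * p0) * ns"
proof -
  have a1: "n0 * qs \<le> n0 * (1/2 * p0 * xs + C/2 * ps * x0)" by (rule mult_left_mono[OF h(3) nn(1)])
  have a2: "(C/2 * ps * n0) * x0 \<le> (C/2 * ps * n0) * (2 * n0)"
    by (rule mult_left_mono[OF h(5)]) (use nn in simp)
  have a3: "(C/2 * ns) * q0 \<le> (C/2 * ns) * (p0 * x0)" by (rule mult_left_mono[OF h(4)]) (use nn in simp)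
  have a4: "(C/2 * ns * p0) * x0 \<le> (C/2 * ns * p0) * (2 * n0)" by (rule mult_left_mono[OF h(5)]) (use nn in simp)
  have e1: "n0 * (1/2 * p0 * xs + C/2 * ps * x0) = n0 * p0 * xs / 2 + (C/2 * ps * n0) * x0" by (simp add: algebra_simps)
  have e2: "(C/2 * ps * n0) * (2 * n0) = C * n0\<^sup>2 * ps" by (simp add: algebra_simps power2_eq_square)
  have e3: "(C/2 * ns) * (p0 * x0) = (C/2 * ns * p0) * x0" by (simp add: algebra_simps)
  have e4: "(C/2 * ns * p0) * (2 * n0) = C * (n0 * p0) * ns" by (simp add: algebra_simps)
  have t1: "ts \<le> 1/2 * (n0 * qs) + (C/2 * ns) * q0" using h(2) by (simp add: algebra_simps)
  have b1: "n0 * qs \<le> n0 * p0 * xs / 2 + C * n0\<^sup>2 * ps" using a1 e1 a2 e2 by linarith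
  have b3: "(C/2 * ns) * q0 \<le> C * (n0 * p0) * ns" using a3 e3 a4 e4 by linarith
  show ?thesis using h(1) t1 b1 b3 by linarith
qed

lemma arith_s: fixes xs ns ps n0 p0 C :: real
  assumes "0 \<le> n0" "0 \<le> p0" "n0 * p0 \<le> 1/2" "1 \<le> C" "0 \<le> ns" "0 \<le> ps"
    "xs \<le> ns + n0 * p0 * xs / 4 + C/2 * n0\<^sup>2 * ps + C * (n0 * p0) * ns"
  shows "xs \<le> (1 + 2 * C * n0 * p0) * ns + 2 * C * n0\<^sup>2 * ps"
proof -
  define t where "t = n0 * p0"
  have t: "0 \<le> t" "t \<le> 1/2" unfolding t_def using assms by auto
  have h: "xs \<le> ns + t * xs / 4 + C/2 * n0\<^sup>2 * ps + C * t * ns" using assms(7) unfolding t_def .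
  have h1: "(1 - t/4) * xs \<le> (1 + C * t) * ns + C/2 * n0\<^sup>2 * ps"
    using h by (simp add: algebra_simps)
  have Ct: "C * t \<le> C * (1/2)" by (rule mult_left_mono[OF t(2)]) (use assms(4) in simp)
  have "0 \<le> t * (C - 1/4 - C * t / 2)" by (rule mult_nonneg_nonneg[OF t(1)]) (use Ct assms(4) in linarith)
  moreover have "(1 - t/4) * (1 + 2 * C * t) - (1 + C * t) = t * (C - 1/4 - C * t / 2)" by (simp add: algebra_simps)
  ultimately have c1: "1 + C * t \<le> (1 - t/4) * (1 + 2 * C * t)" by linarith
  have "(1 - t/4) * (2 * C) = 2 * C - C * t / 2" by (simp add: algebra_simps)
  then have c2: "C/2 \<le> (1 - t/4) * (2 * C)" using Ct assms(4) by linarith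
  have n2: "0 \<le> n0\<^sup>2 * ps" using assms(6) by simp
  have "(1 + C * t) * ns \<le> ((1 - t/4) * (1 + 2 * C * t)) * ns" by (rule mult_right_mono[OF c1 assms(5)])
  moreover have "C/2 * (n0\<^sup>2 * ps) \<le> ((1 - t/4) * (2 * C)) * (n0\<^sup>2 * ps)" by (rule mult_right_mono[OF c2 n2])
  ultimately have "(1 - t/4) * xs \<le> (1 - t/4) * ((1 + 2 * C * t) * ns + 2 * C * n0\<^sup>2 * ps)"
    using h1 by (simp add: algebra_simps)
  moreover have "0 < 1 - t/4" using t by simp
  ultimately have "xs \<le> (1 + 2 * C * t) * ns + 2 * C * n0\<^sup>2 * ps" by simp
  then show ?thesis unfolding t_def by (simp add: mult.assoc)
qed

lemma arith2: fixes ns ps n0 p0 C :: real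
  assumes "n0 * p0 \<le> 1/2" "1 \<le> C" "0 \<le> ns" "0 \<le> ps"
  shows "(1 + 2 * C * n0 * p0) * ns + 2 * C * n0\<^sup>2 * ps \<le> 2 * C * (ns + n0\<^sup>2 * ps)"
proof -
  have "C * (n0 * p0) \<le> C * (1/2)" by (rule mult_left_mono[OF assms(1)]) (use assms(2) in simp)
  moreover have "2 * C * n0 * p0 = 2 * (C * (n0 * p0))" by simp
  ultimately have "1 + 2 * C * n0 * p0 \<le> 2 * C" using assms(2) by linarith
  then have "(1 + 2 * C * n0 * p0) * ns \<le> 2 * C * ns" by (rule mult_right_mono[OF _ assms(3)])
  then show ?thesis by (simp add: algebra_simps)
qed


lemma part1:
  fixes B C :: "'b::finite idx set" and M N P :: "'b mat"
  assumes sob: "sobolev_ok K0 s0 Cs TYPE('b)" and nrm: "is_block_norm nrm"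
    and finB: "finite B" and finC: "finite C" and subB: "SUBI B" and subC: "SUBI C"
    and li: "left_inv B C N M"
    and hyp: "tnorm K0 nrm B C s0 N * tnorm K0 nrm C B s0 P \<le> 1/2"
  shows "\<exists>NP :: 'b mat. left_inv B C NP (\<lambda>k k'. M k k' + P k k') \<and>
           tnorm K0 nrm B C s0 NP \<le> 2 * tnorm K0 nrm B C s0 N \<and>
           (\<forall>s\<ge>s0.
              tnorm K0 nrm B C s NP
                \<le> (1 + 2 * Cs s * tnorm K0 nrm B C s0 N * tnorm K0 nrm C B s0 P) * tnorm K0 nrm B C s N
                  + 2 * Cs s * (tnorm K0 nrm B C s0 N)\<^sup>2 * tnorm K0 nrm C B s P \<and>
              (1 + 2 * Cs s * tnorm K0 nrm B C s0 N * tnorm K0 nrm C B s0 P) * tnorm K0 nrm B C s N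
                  + 2 * Cs s * (tnorm K0 nrm B C s0 N)\<^sup>2 * tnorm K0 nrm C B s P
                \<le> 2 * Cs s * (tnorm K0 nrm B C s N + (tnorm K0 nrm B C s0 N)\<^sup>2 * tnorm K0 nrm C B s P))"
proof -
  have K: "K0 > 0" using sob_K0[OF sob] .
  have K': "K0 \<ge> 0" using K by simp
  let ?O = "{(0::int^'b, 0::nat)}"
  have fO: "finite ?O" by simp
  have linv: "\<forall>k\<in>B. \<forall>k'\<in>B. (\<Sum>j\<in>C. N k j * M j k') = (if k = k' then 1 else 0)"
    using li unfolding left_inv_def .
  define n0 where "n0 = tnorm K0 nrm B C s0 N"
  define p0 where "p0 = tnorm K0 nrm C B s0 P"
  have n0nn: "n0 \<ge> 0" and p0nn: "p0 \<ge> 0" unfolding n0_def p0_def by (simp_all add: tnorm_nonneg[OF K'])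
  have hyp': "n0 * p0 \<le> 1/2" using hyp unfolding n0_def p0_def .
  define A where "A = mmul C N P"
  have hA: "tnorm K0 nrm B B s0 A \<le> n0 * p0"
    unfolding A_def n0_def p0_def by (rule tnorm_mult0[OF sob nrm finB finC finB subB subC subB])
  have inj: "\<forall>k\<in>B. x k = 0" if hx: "\<forall>k\<in>B. x k + (\<Sum>j\<in>B. (\<Sum>c\<in>C. N k c * P c j) * x j) = 0" for x
  proof -
    define X :: "'b mat" where "X = (\<lambda>k k'. x k)"
    have "tnorm K0 nrm B ?O s0 X = tnorm K0 nrm B ?O s0 (\<lambda>k k'. (\<lambda>k k'. 0) k k' - mmul B A X k k')"
    proof (rule tnorm_cong[OF nrm subB SUBI00])
      fix k k' assume k: "k \<in> B" and "k' \<in> ?O"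
      show "X k k' = (\<lambda>k k'. 0) k k' - mmul B A X k k'"
        using hx k unfolding X_def mmul_def A_def by (simp add: eq_neg_iff_add_eq_0)
    qed
    also have "\<dots> \<le> tnorm K0 nrm B ?O s0 (\<lambda>k k'. 0) + tnorm K0 nrm B ?O s0 (mmul B A X)"
      by (rule tnorm_diff[OF K' nrm finB fO subB SUBI00])
    also have "tnorm K0 nrm B ?O s0 (\<lambda>k k'. 0) = 0" by (rule tnorm_zero[OF nrm finB fO subB SUBI00]) simp
    also have "tnorm K0 nrm B ?O s0 (mmul B A X) \<le> tnorm K0 nrm B B s0 A * tnorm K0 nrm B ?O s0 X"
      by (rule tnorm_mult0[OF sob nrm finB finB fO subB subB SUBI00])
    also have "\<dots> \<le> (1/2) * tnorm K0 nrm B ?O s0 X"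
      by (rule mult_right_mono[OF order.trans[OF hA hyp'] tnorm_nonneg[OF K']])
    finally have "tnorm K0 nrm B ?O s0 X \<le> 0" by simp
    then show ?thesis using tnorm_zeroD[OF K nrm finB fO subB SUBI00] unfolding X_def by blast
  qed
  obtain NP where NP1: "\<forall>k\<in>B. \<forall>k'\<in>B. (\<Sum>j\<in>C. NP k j * (M j k' + P j k')) = (if k = k' then 1 else 0)"
    and NP2: "\<forall>k\<in>B. \<forall>c\<in>C. NP k c = N k c - (\<Sum>c'\<in>C. N k c' * (\<Sum>j\<in>B. P c' j * NP j c))"
    using construct[OF finB finC linv] inj by blast
  define Q where "Q = mmul B P NP"
  have tri: "tnorm K0 nrm B C s NP \<le> tnorm K0 nrm B C s N + tnorm K0 nrm B C s (mmul C N Q)" for s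
  proof -
    have "tnorm K0 nrm B C s NP = tnorm K0 nrm B C s (\<lambda>k k'. N k k' - mmul C N Q k k')"
      by (rule tnorm_cong[OF nrm subB subC]) (use NP2 in \<open>simp add: Q_def mmul_def\<close>)
    also have "\<dots> \<le> tnorm K0 nrm B C s N + tnorm K0 nrm B C s (mmul C N Q)"
      by (rule tnorm_diff[OF K' nrm finB finC subB subC])
    finally show ?thesis .
  qed
  define x0 where "x0 = tnorm K0 nrm B C s0 NP"
  have x0nn: "x0 \<ge> 0" unfolding x0_def by (simp_all add: tnorm_nonneg[OF K'])
  have q0: "tnorm K0 nrm C C s0 Q \<le> p0 * x0"
    unfolding Q_def p0_def x0_def by (rule tnorm_mult0[OF sob nrm finC finB finC subC subB subC])
  have x0b: "x0 \<le> n0 + n0 * p0 * x0"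
  proof -
    have "tnorm K0 nrm B C s0 (mmul C N Q) \<le> n0 * tnorm K0 nrm C C s0 Q"
      unfolding n0_def by (rule tnorm_mult0[OF sob nrm finB finC finC subB subC subC])
    also have "\<dots> \<le> n0 * (p0 * x0)" by (rule mult_left_mono[OF q0 n0nn])
    finally show ?thesis using tri[of s0] unfolding x0_def n0_def by (simp add: mult.assoc)
  qed
  have x02: "x0 \<le> 2 * n0" by (rule arith0[OF x0nn hyp' x0b])
  have sbound: "tnorm K0 nrm B C s NP
                \<le> (1 + 2 * Cs s * n0 * p0) * tnorm K0 nrm B C s N
                  + 2 * Cs s * n0\<^sup>2 * tnorm K0 nrm C B s P \<and>
              (1 + 2 * Cs s * n0 * p0) * tnorm K0 nrm B C s N
                  + 2 * Cs s * n0\<^sup>2 * tnorm K0 nrm C B s P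
                \<le> 2 * Cs s * (tnorm K0 nrm B C s N + n0\<^sup>2 * tnorm K0 nrm C B s P)" if s: "s \<ge> s0" for s
  proof
    have C1: "Cs s \<ge> 1" by (rule sob_Cs[OF sob s])
    have nsnn: "tnorm K0 nrm B C s N \<ge> 0" and psnn: "tnorm K0 nrm C B s P \<ge> 0" by (simp_all add: tnorm_nonneg[OF K'])
    have qs: "tnorm K0 nrm C C s Q \<le> 1/2 * p0 * tnorm K0 nrm B C s NP + Cs s / 2 * tnorm K0 nrm C B s P * x0"
      unfolding Q_def p0_def x0_def by (rule tnorm_mult[OF sob nrm finC finB finC subC subB subC s])
    have ts: "tnorm K0 nrm B C s (mmul C N Q) \<le> 1/2 * n0 * tnorm K0 nrm C C s Q + Cs s / 2 * tnorm K0 nrm B C s N * tnorm K0 nrm C C s0 Q"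
      unfolding n0_def by (rule tnorm_mult[OF sob nrm finB finC finC subB subC subC s])
    have comb: "tnorm K0 nrm B C s NP \<le> tnorm K0 nrm B C s N + n0 * p0 * tnorm K0 nrm B C s NP / 4
        + Cs s / 2 * n0\<^sup>2 * tnorm K0 nrm C B s P + Cs s * (n0 * p0) * tnorm K0 nrm B C s N"
      by (rule arith_comb[OF n0nn p0nn nsnn psnn _ x0nn tri ts qs q0 x02]) (use C1 in simp)
    show "tnorm K0 nrm B C s NP \<le> (1 + 2 * Cs s * n0 * p0) * tnorm K0 nrm B C s N
                  + 2 * Cs s * n0\<^sup>2 * tnorm K0 nrm C B s P"
      by (rule arith_s[OF n0nn p0nn hyp' C1 nsnn psnn comb])
    show "(1 + 2 * Cs s * n0 * p0) * tnorm K0 nrm B C s N + 2 * Cs s * n0\<^sup>2 * tnorm K0 nrm C B s P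
                \<le> 2 * Cs s * (tnorm K0 nrm B C s N + n0\<^sup>2 * tnorm K0 nrm C B s P)"
      by (rule arith2[OF hyp' C1 nsnn psnn])
  qed
  have "left_inv B C NP (\<lambda>k k'. M k k' + P k k')" unfolding left_inv_def using NP1 by simp
  moreover have "tnorm K0 nrm B C s0 NP \<le> 2 * tnorm K0 nrm B C s0 N" using x02 unfolding x0_def n0_def .
  ultimately show ?thesis using sbound unfolding n0_def p0_def by blast
qed


lemma vnorm_pos:
  assumes K: "K0 > 0" and nrm: "is_block_norm nrm" and fin: "finite Cl" and sub: "SUBI Cl"
    and h: "\<exists>k\<in>Cl. h k \<noteq> 0"
  shows "vnorm0 K0 nrm (Cl :: 'b::finite idx set) h > 0"
proof (rule ccontr)
  assume "\<not> vnorm0 K0 nrm Cl h > 0"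
  then have "tnorm K0 nrm Cl {(0::int^'b, 0::nat)} 0 (\<lambda>k k'. h k) \<le> 0" unfolding vnorm0_def by simp
  from tnorm_zeroD[OF K nrm fin _ sub SUBI00 this] h show False by auto
qed

lemma part2:
  fixes B C :: "'b::finite idx set" and M N P :: "'b mat"
  assumes sob: "sobolev_ok K0 s0 Cs TYPE('b)" and s0: "s0 > 0" and nrm: "is_block_norm nrm"
    and finB: "finite B" and finC: "finite C" and subB: "SUBI B" and subC: "SUBI C"
    and li: "left_inv B C N M"
    and hyp: "opnorm0 K0 nrm B C N * opnorm0 K0 nrm C B P \<le> 1/2"
  shows "\<exists>NP :: 'b mat. left_inv B C NP (\<lambda>k k'. M k k' + P k k') \<and>
           opnorm0 K0 nrm B C NP \<le> 2 * opnorm0 K0 nrm B C N"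
proof -
  have K: "K0 > 0" using sob_K0[OF sob] .
  have K': "K0 \<ge> 0" using K by simp
  let ?O = "{(0::int^'b, 0::nat)}"
  have fO: "finite ?O" by simp
  have linv: "\<forall>k\<in>B. \<forall>k'\<in>B. (\<Sum>j\<in>C. N k j * M j k') = (if k = k' then 1 else 0)"
    using li unfolding left_inv_def .
  define LN where "LN = opnorm0 K0 nrm B C N"
  define LP where "LP = opnorm0 K0 nrm C B P"
  have obN: "LN \<ge> 0" "\<And>h. vnorm0 K0 nrm B (matvec C N h) \<le> LN * vnorm0 K0 nrm C h"
    unfolding LN_def using op_bound[OF sob s0 nrm finB finC subB subC, of N] by auto
  have obP: "LP \<ge> 0" "\<And>h. vnorm0 K0 nrm C (matvec B P h) \<le> LP * vnorm0 K0 nrm B h"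
    unfolding LP_def using op_bound[OF sob s0 nrm finC finB subC subB, of P] by auto
  have hyp': "LN * LP \<le> 1/2" using hyp unfolding LN_def LP_def .
  have vnn: "vnorm0 K0 nrm X h \<ge> 0" for X h unfolding vnorm0_def by (rule tnorm_nonneg[OF K'])
  have vzero: "vnorm0 K0 nrm B (\<lambda>k. 0) = 0" unfolding vnorm0_def
    by (rule tnorm_zero[OF nrm finB fO subB SUBI00]) simp
  have vdiff: "vnorm0 K0 nrm B (\<lambda>k. f k - g k) \<le> vnorm0 K0 nrm B f + vnorm0 K0 nrm B g" for f g
    unfolding vnorm0_def using tnorm_diff[OF K' nrm finB fO subB SUBI00, of 0 "\<lambda>k k'. f k" "\<lambda>k k'. g k"] by simp
  have vcong: "vnorm0 K0 nrm B f = vnorm0 K0 nrm B g" if "\<forall>k\<in>B. f k = g k" for f g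
    unfolding vnorm0_def by (rule tnorm_cong[OF nrm subB SUBI00]) (use that in simp)
  have chain: "LN * (LP * v) \<le> 1/2 * v" if "v \<ge> 0" for v
  proof -
    have "LN * (LP * v) = (LN * LP) * v" by simp
    also have "\<dots> \<le> 1/2 * v" by (rule mult_right_mono[OF hyp' that])
    finally show ?thesis .
  qed
  have inj: "\<forall>k\<in>B. x k = 0" if hx: "\<forall>k\<in>B. x k + (\<Sum>j\<in>B. (\<Sum>c\<in>C. N k c * P c j) * x j) = 0" for x
  proof -
    let ?y = "matvec B P x"
    have eq: "(\<Sum>j\<in>B. (\<Sum>c\<in>C. N k c * P c j) * x j) = matvec C N ?y k" for k
      unfolding matvec_def using sum_swap_mult[of "N k" P x B C] by simp
    have "vnorm0 K0 nrm B x = vnorm0 K0 nrm B (\<lambda>k. 0 - matvec C N ?y k)"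
      by (rule vcong) (use hx eq in \<open>simp add: eq_neg_iff_add_eq_0\<close>)
    also have "\<dots> \<le> vnorm0 K0 nrm B (\<lambda>k. 0) + vnorm0 K0 nrm B (matvec C N ?y)" by (rule vdiff)
    also have "\<dots> \<le> LN * (LP * vnorm0 K0 nrm B x)"
      using vzero obN(2)[of ?y] mult_left_mono[OF obP(2)[of x] obN(1)] by simp
    also have "\<dots> \<le> 1/2 * vnorm0 K0 nrm B x" by (rule chain[OF vnn])
    finally have "tnorm K0 nrm B ?O 0 (\<lambda>k k'. x k) \<le> 0" unfolding vnorm0_def by simp
    then show ?thesis using tnorm_zeroD[OF K nrm finB fO subB SUBI00] by blast
  qed
  obtain NP where NP1: "\<forall>k\<in>B. \<forall>k'\<in>B. (\<Sum>j\<in>C. NP k j * (M j k' + P j k')) = (if k = k' then 1 else 0)"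
    and NP2: "\<forall>k\<in>B. \<forall>c\<in>C. NP k c = N k c - (\<Sum>c'\<in>C. N k c' * (\<Sum>j\<in>B. P c' j * NP j c))"
    using construct[OF finB finC linv] inj by blast
  have bound: "vnorm0 K0 nrm B (matvec C NP h) \<le> 2 * LN * vnorm0 K0 nrm C h" for h
  proof -
    let ?z = "matvec C NP h"
    have eq: "?z k = matvec C N h k - matvec C N (matvec B P ?z) k" if k: "k \<in> B" for k
    proof -
      have "?z k = (\<Sum>c\<in>C. (N k c - (\<Sum>c'\<in>C. N k c' * (\<Sum>j\<in>B. P c' j * NP j c))) * h c)"
        unfolding matvec_def using NP2 k by simp
      also have "\<dots> = (\<Sum>c\<in>C. N k c * h c) - (\<Sum>c\<in>C. (\<Sum>c'\<in>C. N k c' * (\<Sum>j\<in>B. P c' j * NP j c)) * h c)"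
        by (simp add: left_diff_distrib sum_subtractf)
      also have "(\<Sum>c\<in>C. (\<Sum>c'\<in>C. N k c' * (\<Sum>j\<in>B. P c' j * NP j c)) * h c)
          = (\<Sum>c'\<in>C. N k c' * (\<Sum>c\<in>C. (\<Sum>j\<in>B. P c' j * NP j c) * h c))"
        using sum_swap_mult[of "N k" "\<lambda>c' c. \<Sum>j\<in>B. P c' j * NP j c" h C C] by simp
      also have "\<dots> = (\<Sum>c'\<in>C. N k c' * (\<Sum>j\<in>B. P c' j * (\<Sum>c\<in>C. NP j c * h c)))"
        using sum_swap_mult[of "P _" NP h C B] by simp
      finally show ?thesis unfolding matvec_def by simp
    qed
    have "vnorm0 K0 nrm B ?z = vnorm0 K0 nrm B (\<lambda>k. matvec C N h k - matvec C N (matvec B P ?z) k)"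
      by (rule vcong) (use eq in simp)
    also have "\<dots> \<le> vnorm0 K0 nrm B (matvec C N h) + vnorm0 K0 nrm B (matvec C N (matvec B P ?z))" by (rule vdiff)
    also have "\<dots> \<le> LN * vnorm0 K0 nrm C h + LN * (LP * vnorm0 K0 nrm B ?z)"
      using obN(2)[of h] obN(2)[of "matvec B P ?z"] mult_left_mono[OF obP(2)[of ?z] obN(1)] by simp
    also have "\<dots> \<le> LN * vnorm0 K0 nrm C h + 1/2 * vnorm0 K0 nrm B ?z" using chain[OF vnn] by simp
    finally show ?thesis by simp
  qed
  have "opnorm0 K0 nrm B C NP \<le> 2 * LN"
    unfolding opnorm0_def
  proof (rule cSup_least)
    show "insert 0 {vnorm0 K0 nrm B (matvec C NP h) / vnorm0 K0 nrm C h | h. \<exists>k\<in>C. h k \<noteq> 0} \<noteq> {}" by simp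
    fix r assume "r \<in> insert 0 {vnorm0 K0 nrm B (matvec C NP h) / vnorm0 K0 nrm C h | h. \<exists>k\<in>C. h k \<noteq> 0}"
    then consider "r = 0" | h where "r = vnorm0 K0 nrm B (matvec C NP h) / vnorm0 K0 nrm C h" "\<exists>k\<in>C. h k \<noteq> 0"
      by blast
    then show "r \<le> 2 * LN"
    proof cases
      case 1 then show ?thesis using obN(1) by simp
    next
      case (2 h)
      have "vnorm0 K0 nrm C h > 0" by (rule vnorm_pos[OF K nrm finC subC 2(2)])
      then show ?thesis using 2(1) bound[of h] by (simp add: divide_le_eq)
    qed
  qed
  moreover have "left_inv B C NP (\<lambda>k k'. M k k' + P k k')" unfolding left_inv_def using NP1 by simp
  ultimately show ?thesis unfolding LN_def by blast
qed

theorem lemma3p9: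
  fixes K0 s0 :: real and Cs :: "real \<Rightarrow> real" and nrm :: blknorm
  assumes b_ge: "CARD('b::finite) \<ge> 2"
    and s0_gt: "s0 > real CARD('b) / 2"
    and sob: "sobolev_ok K0 s0 Cs TYPE('b)"
    and nrm: "is_block_norm nrm"
  shows "\<exists>Cf :: real \<Rightarrow> real. \<forall>(B :: 'b idx set) (C :: 'b idx set) (M :: 'b mat) (N :: 'b mat).
     finite B \<longrightarrow> finite C \<longrightarrow> B \<subseteq> UNIV \<times> {0, 1} \<longrightarrow> C \<subseteq> UNIV \<times> {0, 1} \<longrightarrow>
     left_inv B C N M \<longrightarrow>
     (\<forall>P :: 'b mat.
        tnorm K0 nrm B C s0 N * tnorm K0 nrm C B s0 P \<le> 1/2 \<longrightarrow>
        (\<exists>NP :: 'b mat. left_inv B C NP (\<lambda>k k'. M k k' + P k k') \<and>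
           tnorm K0 nrm B C s0 NP \<le> 2 * tnorm K0 nrm B C s0 N \<and>
           (\<forall>s\<ge>s0.
              tnorm K0 nrm B C s NP
                \<le> (1 + Cf s * tnorm K0 nrm B C s0 N * tnorm K0 nrm C B s0 P) * tnorm K0 nrm B C s N
                  + Cf s * (tnorm K0 nrm B C s0 N)\<^sup>2 * tnorm K0 nrm C B s P \<and>
              (1 + Cf s * tnorm K0 nrm B C s0 N * tnorm K0 nrm C B s0 P) * tnorm K0 nrm B C s N
                  + Cf s * (tnorm K0 nrm B C s0 N)\<^sup>2 * tnorm K0 nrm C B s P
                \<le> Cf s * (tnorm K0 nrm B C s N + (tnorm K0 nrm B C s0 N)\<^sup>2 * tnorm K0 nrm C B s P)))) \<and>
     (\<forall>P :: 'b mat.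
        opnorm0 K0 nrm B C N * opnorm0 K0 nrm C B P \<le> 1/2 \<longrightarrow>
        (\<exists>NP :: 'b mat. left_inv B C NP (\<lambda>k k'. M k k' + P k k') \<and>
           opnorm0 K0 nrm B C NP \<le> 2 * opnorm0 K0 nrm B C N))"
proof -
  have "real CARD('b) / 2 \<ge> 0" by simp
  then have s0pos: "s0 > 0" using s0_gt by linarith
  show ?thesis
    apply (rule exI[of _ "\<lambda>s. 2 * Cs s"])
    apply (intro allI impI conjI)
     apply (rule part1[OF sob nrm]; assumption)
    apply (rule part2[OF sob s0pos nrm]; assumption)
    done
qed

end
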